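(* Let $\{S_t\}_{t=1}^T$ be a latent homogeneous first-order Markov chain on $\{1,\dots,K\}$ and let $\mathbf{Y}_t=[Y_t^{(1)},\dots,Y_t^{(d)}]'$ be a $d$-dimensional random vector. Fix $t$ and a state $k$, and suppose that, conditionally on $S_t=k$, $\mathbf{Y}_t \sim \mathcal{GH}_d(\boldsymbol\mu_k,\boldsymbol\Sigma_k,\lambda_k,\chi_k,\psi_k)$. Let $\boldsymbol\Theta_k=\boldsymbol\Sigma_k^{-1}$ and let $G_k=(V,E_k)$ be the undirected graph with vertex set $V=\{1,\dots,d\}$ and edge set $E_k=\{(j,h): j\neq h,\ \Theta_{k,j,h}\neq 0\}$, where $\Theta_{k,j,h}$ is the $(j,h)$ entry of $\boldsymbol\Theta_k$. If two nodes $j,h\in V$, $j\neq h$, are separated in $G_k$ by a set of nodes $C\subseteq V\setminus\{j,h\}$ (i.e., every path in $G_k$ from $j$ to $h$ passes through a vertex of $C$), then $Y_t^{(j)}$ and $Y_t^{(h)}$ are conditionally uncorrelated given $\mathbf{Y}_t^{(C)}=(Y_t^{(i)})_{i\in C}$ and $S_t=k$.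
   Context: The (symmetric) multivariate generalized hyperbolic distribution $\mathcal{GH}_d(\boldsymbol\mu,\boldsymbol\Sigma,\lambda,\chi,\psi)$, with $\boldsymbol\mu\in\mathbb{R}^d$, $\boldsymbol\Sigma$ a $d\times d$ symmetric positive definite matrix with $|\boldsymbol\Sigma|=1$, $\lambda\in\mathbb{R}$, $\chi>0$, $\psi>0$, has density $$f(\mathbf{y})=\frac{1}{(2\pi)^{d/2}|\boldsymbol\Sigma|^{1/2}K_\lambda(\sqrt{\psi\chi})}\left[\frac{\chi+\delta(\mathbf{y})}{\psi}\right]^{\frac{\lambda-d/2}{2}}K_{\lambda-d/2}\left(\sqrt{[\chi+\delta(\mathbf{y})]\psi}\right),$$ where $\delta(\mathbf{y})=(\mathbf{y}-\boldsymbol\mu)'\boldsymbol\Sigma^{-1}(\mathbf{y}-\boldsymbol\mu)$ and $K_\nu$ is the modified Bessel function of the third kind of order $\nu$. Equivalently, $\mathbf{Y}=\boldsymbol\mu+\sqrt{W}\boldsymbol\Sigma^{1/2}\mathbf{Z}$ with $\mathbf{Z}\sim\mathcal{N}_d(\mathbf{0},\mathbf{I}_d)$ independent of $W\sim\mathcal{GIG}(\lambda,\chi,\psi)$ (generalized inverse Gaussian), so that $\mathbf{Y}\mid W=w\sim\mathcal{N}_d(\boldsymbol\mu,w\boldsymbol\Sigma)$. "Conditionally uncorrelated given $\mathbf{Y}_t^{(C)}$ and $S_t=k$" means that the conditional covariance of $Y_t^{(j)}$ and $Y_t^{(h)}$ given $\mathbf{Y}_t^{(C)}$ and $S_t=k$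 is zero. *)

theory Defs
  imports "HOL-Probability.Probability"
begin

definition besselK :: "real \<Rightarrow> real \<Rightarrow> real" where
  "besselK \<nu> x = (LBINT u:{0..}. exp (- x * cosh u) * cosh (\<nu> * u))"

definition sym_pos_def :: "real^'d^'d \<Rightarrow> bool" where
  "sym_pos_def A \<longleftrightarrow> transpose A = A \<and> (\<forall>x. x \<noteq> 0 \<longrightarrow> x \<bullet> (A *v x) > 0)"

definition GH_density ::
  "real^'d \<Rightarrow> real^'d^'d \<Rightarrow> real \<Rightarrow> real \<Rightarrow> real \<Rightarrow> real^'d \<Rightarrow> real" where
  "GH_density \<mu> \<Sigma> lam chi psi y =
     (let d = real CARD('d);
          \<delta> = (y - \<mu>) \<bullet> (matrix_inv \<Sigma> *v (y - \<mu>))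
      in 1 / ((2 * pi) powr (d / 2) * sqrt (det \<Sigma>) * besselK lam (sqrt (psi * chi)))
         * ((chi + \<delta>) / psi) powr ((lam - d / 2) / 2)
         * besselK (lam - d / 2) (sqrt ((chi + \<delta>) * psi)))"

definition hom_markov_chain :: "'a measure \<Rightarrow> (nat \<Rightarrow> 'a \<Rightarrow> nat) \<Rightarrow> nat \<Rightarrow> nat \<Rightarrow> bool" where
  "hom_markov_chain M S T K \<longleftrightarrow>
     (\<forall>t\<in>{1..T}. S t \<in> measurable M (count_space UNIV) \<and> (\<forall>\<omega>\<in>space M. S t \<omega> \<in> {1..K})) \<and>
     (\<exists>P :: nat \<Rightarrow> nat \<Rightarrow> real. \<forall>t. 1 \<le> t \<longrightarrow> t < T \<longrightarrow> (\<forall>s :: nat \<Rightarrow> nat.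
        measure M {\<omega>\<in>space M. \<forall>i\<in>{1..Suc t}. S i \<omega> = s i}
        = measure M {\<omega>\<in>space M. \<forall>i\<in>{1..t}. S i \<omega> = s i} * P (s t) (s (Suc t))))"

(* undirected graph G = (V, E) with V = UNIV :: 'd set and E = {(j,h). j \<noteq> h \<and> Theta_jh \<noteq> 0} *)
definition precision_edge :: "real^'d^'d \<Rightarrow> 'd \<Rightarrow> 'd \<Rightarrow> bool" where
  "precision_edge \<Theta> j h \<longleftrightarrow> j \<noteq> h \<and> \<Theta> $ j $ h \<noteq> 0"

definition is_path :: "('d \<Rightarrow> 'd \<Rightarrow> bool) \<Rightarrow> 'd list \<Rightarrow> 'd \<Rightarrow> 'd \<Rightarrow> bool" where
  "is_path E ps j h \<longleftrightarrow> ps \<noteq> [] \<and> hd ps = j \<and> last ps = h \<and> distinct ps \<and>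
     (\<forall>i. Suc i < length ps \<longrightarrow> E (ps ! i) (ps ! Suc i))"

definition separates :: "('d \<Rightarrow> 'd \<Rightarrow> bool) \<Rightarrow> 'd set \<Rightarrow> 'd \<Rightarrow> 'd \<Rightarrow> bool" where
  "separates E C j h \<longleftrightarrow> (\<forall>ps. is_path E ps j h \<longrightarrow> set ps \<inter> C \<noteq> {})"

definition coord_sigma :: "'a measure \<Rightarrow> ('a \<Rightarrow> real^'d) \<Rightarrow> 'd set \<Rightarrow> 'a measure" where
  "coord_sigma M Y C = sigma (space M)
     (\<Union>i\<in>C. {(\<lambda>\<omega>. Y \<omega> $ i) -` B \<inter> space M | B. B \<in> sets borel})"

definition cond_cov :: "'a measure \<Rightarrow> 'a measure \<Rightarrow> ('a \<Rightarrow> real) \<Rightarrow> ('a \<Rightarrow> real) \<Rightarrow> 'a \<Rightarrow> real" where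
  "cond_cov M F X Z \<omega> =
     real_cond_exp M F (\<lambda>x. X x * Z x) \<omega> - real_cond_exp M F X \<omega> * real_cond_exp M F Z \<omega>"

end

theory Submission
  imports Defs "HOL-Real_Asymp.Real_Asymp"
begin

lemma shear_det_1:
  fixes m n :: "'n::finite"
  assumes "m \<noteq> n"
  shows "det (matrix (\<lambda>v::real^'n. \<chi> i. if i = m then v $ m + v $ n else v $ i)) = 1"
proof -
  have "matrix (\<lambda>v::real^'n. \<chi> i. if i = m then v $ m + v $ n else v $ i)
      = (\<chi> k. if k = m then row m (mat 1) + 1 *s row n (mat 1) else row k (mat 1))"
    by (auto simp: vec_eq_iff matrix_def row_def mat_def axis_def)
  then show ?thesis
    using det_row_operation[OF assms, of "mat 1 :: real^'n^'n" 1] by simp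
qed

proposition
 fixes f :: "real^'n::finite \<Rightarrow> real^'n::_"
  assumes "linear f" "S \<in> lmeasurable"
  shows my_measurable_linear_image: "(f ` S) \<in> lmeasurable"
    and my_measure_linear_image: "measure lebesgue (f ` S) = \<bar>det (matrix f)\<bar> * measure lebesgue S" (is "?Q f S")
proof -
  have "\<forall>S \<in> lmeasurable. (f ` S) \<in> lmeasurable \<and> ?Q f S"
  proof (rule induct_linear_elementary [OF \<open>linear f\<close>]; intro ballI)
    fix f g and S :: "(real,'n) vec set"
    assume "linear f" and "linear g"
      and f [rule_format]: "\<forall>S \<in> lmeasurable. f ` S \<in> lmeasurable \<and> ?Q f S"
      and g [rule_format]: "\<forall>S \<in> lmeasurable. g ` S \<in> lmeasurable \<and> ?Q g S"
      and S: "S \<in> lmeasurable"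
    then have gS: "g ` S \<in> lmeasurable"
      by blast
    show "(f \<circ> g) ` S \<in> lmeasurable \<and> ?Q (f \<circ> g) S"
      using f [OF gS] g [OF S] matrix_compose [OF \<open>linear g\<close> \<open>linear f\<close>]
      by (simp add: o_def image_comp abs_mult det_mul)
  next
    fix f :: "real^'n::_ \<Rightarrow> real^'n::_" and i and S :: "(real^'n::_) set"
    assume "linear f" and 0: "\<And>x. f x $ i = 0" and "S \<in> lmeasurable"
    then have "\<not> inj f"
      by (metis (full_types) linear_injective_imp_surjective one_neq_zero surjE vec_component)
    have detf: "det (matrix f) = 0"
      using \<open>\<not> inj f\<close> det_nz_iff_inj[OF \<open>linear f\<close>] by blast
    show "f ` S \<in> lmeasurable \<and> ?Q f S"
    proof
      show "f ` S \<in> lmeasurable"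
        using lmeasurable_iff_indicator_has_integral \<open>linear f\<close> \<open>\<not> inj f\<close> negligible_UNIV negligible_linear_singular_image by blast
      have "measure lebesgue (f ` S) = 0"
        by (meson \<open>\<not> inj f\<close> \<open>linear f\<close> negligible_imp_measure0 negligible_linear_singular_image)
      also have "\<dots> = \<bar>det (matrix f)\<bar> * measure lebesgue S"
        by (simp add: detf)
      finally show "?Q f S" .
    qed
  next
    fix c and S :: "(real^'n::_) set"
    assume "S \<in> lmeasurable"
    show "(\<lambda>a. \<chi> i. c i * a $ i) ` S \<in> lmeasurable \<and> ?Q (\<lambda>a. \<chi> i. c i * a $ i) S"
    proof
      show "(\<lambda>a. \<chi> i. c i * a $ i) ` S \<in> lmeasurable"
        by (simp add: \<open>S \<in> lmeasurable\<close> measurable_stretch)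
      show "?Q (\<lambda>a. \<chi> i. c i * a $ i) S"
        by (simp add: measure_stretch [OF \<open>S \<in> lmeasurable\<close>, of c] axis_def matrix_def det_diagonal)
    qed
  next
    fix m :: "'n" and n :: "'n" and S :: "(real, 'n) vec set"
    assume "m \<noteq> n" and "S \<in> lmeasurable"
    let ?h = "\<lambda>v::(real, 'n) vec. \<chi> i. v $ Transposition.transpose m n i"
    have lin: "linear ?h"
      by (rule linearI) (simp_all add: plus_vec_def scaleR_vec_def)
    have meq: "measure lebesgue ((\<lambda>v::(real, 'n) vec. \<chi> i. v $ Transposition.transpose m n i) ` cbox a b)
             = measure lebesgue (cbox a b)" for a b
    proof (cases "cbox a b = {}")
      case True then show ?thesis
        by simp
    next
      case False
      then have him: "?h ` (cbox a b) \<noteq> {}"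
        by blast
      have eq: "?h ` (cbox a b) = cbox (?h a) (?h b)"
        by (auto simp: image_iff lambda_swap_Galois mem_box_cart) (metis transpose_involutory)+
      show ?thesis
        using him prod.permute [OF permutes_swap_id, where S=UNIV and g="\<lambda>i. (b - a)$i", symmetric]
        by (simp add: eq content_cbox_cart False)
    qed
    have "(\<chi> i j. if Transposition.transpose m n i = j then 1 else 0) = (\<chi> i j. if j = Transposition.transpose m n i then 1 else (0::real))"
      by (auto intro!: Cart_lambda_cong)
    then have "matrix ?h = transpose(\<chi> i j. mat 1 $ i $ Transposition.transpose m n j)"
      by (auto simp: matrix_eq transpose_def axis_def mat_def matrix_def)
    then have 1: "\<bar>det (matrix ?h)\<bar> = 1"
      by (simp add: det_permute_columns permutes_swap_id sign_swap_id abs_mult)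
    show "?h ` S \<in> lmeasurable \<and> ?Q ?h S"
      using measure_linear_sufficient [OF lin \<open>S \<in> lmeasurable\<close>] meq 1 by force
  next
    fix m n :: "'n" and S :: "(real, 'n) vec set"
    assume "m \<noteq> n" and "S \<in> lmeasurable"
    let ?h = "\<lambda>v::(real, 'n) vec. \<chi> i. if i = m then v $ m + v $ n else v $ i"
    have lin: "linear ?h"
      by (rule linearI) (auto simp: algebra_simps plus_vec_def scaleR_vec_def vec_eq_iff)
    have 1: "det(matrix ?h) = 1"
      using shear_det_1[OF \<open>m \<noteq> n\<close>] .
    have meq: "measure lebesgue (?h ` (cbox a b)) = measure lebesgue (cbox a b)" for a b
    proof (cases "cbox a b = {}")
      case True then show ?thesis by simp
    next
      case False
      then have ne: "(+) (\<chi> i. if i = n then - a $ n else 0) ` cbox a b \<noteq> {}"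
        by auto
      let ?v = "\<chi> i. if i = n then - a $ n else 0"
      have "?h ` cbox a b
            = (+) (\<chi> i. if i = m \<or> i = n then a $ n else 0) ` ?h ` (+) ?v ` (cbox a b)"
        using \<open>m \<noteq> n\<close> unfolding image_comp o_def by (force simp: vec_eq_iff)
      then have "measure lebesgue (?h ` (cbox a b))
               = measure lebesgue ((\<lambda>v. \<chi> i. if i = m then v $ m + v $ n else v $ i) `
                                   (+) ?v ` cbox a b)"
        by (rule ssubst) (rule measure_translation)
      also have "\<dots> = measure lebesgue ((\<lambda>v. \<chi> i. if i = m then v $ m + v $ n else v $ i) ` cbox (?v +a) (?v + b))"
        by (metis (no_types, lifting) cbox_translation)
      also have "\<dots> = measure lebesgue ((+) ?v ` cbox a b)"
        apply (subst measure_shear_interval)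
        using \<open>m \<noteq> n\<close> ne apply auto
        apply (simp add: cbox_translation)
        by (metis cbox_borel cbox_translation measure_completion sets_lborel)
      also have "\<dots> = measure lebesgue (cbox a b)"
        by (rule measure_translation)
        finally show ?thesis .
      qed
    show "?h ` S \<in> lmeasurable \<and> ?Q ?h S"
      using measure_linear_sufficient [OF lin \<open>S \<in> lmeasurable\<close>] meq 1 by force
  qed
  with assms show "(f ` S) \<in> lmeasurable" "?Q f S"
    by metis+
qed

lemma lborel_linear_involution:
  fixes L :: "real^'n::finite \<Rightarrow> real^'n"
  assumes lin: "linear L" and inv: "\<And>x. L (L x) = x"
  shows "distr lborel borel L = lborel"
proof -
  have detm: "\<bar>det (matrix L)\<bar> = 1"
  proof -
    have LL: "L \<circ> L = id" using inv by (auto simp: fun_eq_iff)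
    have "matrix (L \<circ> L) = matrix L ** matrix L"
      using matrix_compose[OF lin lin] .
    then have "matrix L ** matrix L = mat 1" using LL by (simp add: matrix_id_mat_1)
    then have "det (matrix L) * det (matrix L) = 1"
      by (metis det_mul det_I)
    then have "(det (matrix L))^2 = 1" by (simp add: power2_eq_square)
    then show ?thesis by (auto simp: power2_eq_1_iff)
  qed
  have cont: "continuous_on UNIV L"
    using lin by (simp add: linear_continuous_on linear_linear)
  have meas[measurable]: "L \<in> borel_measurable borel"
    using cont by (rule borel_measurable_continuous_onI)
  show ?thesis
  proof (rule lborel_eqI[symmetric])
    show "sets (distr lborel borel L) = sets borel" by simp
    fix l u :: "real^'n"
    assume le: "\<And>b. b \<in> Basis \<Longrightarrow> l \<bullet> b \<le> u \<bullet> b"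
    have pre: "L -` box l u = L ` box l u"
    proof (rule set_eqI)
      fix x
      show "x \<in> L -` box l u \<longleftrightarrow> x \<in> L ` box l u"
      proof
        assume "x \<in> L -` box l u"
        then have "L x \<in> box l u" by simp
        moreover have "x = L (L x)" using inv by simp
        ultimately show "x \<in> L ` box l u" by (rule rev_image_eqI)
      next
        assume "x \<in> L ` box l u"
        then obtain y where "y \<in> box l u" "x = L y" by blast
        then show "x \<in> L -` box l u" using inv by simp
      qed
    qed
    have bm: "box l u \<in> lmeasurable" by simp
    have img: "L ` box l u \<in> lmeasurable"
      using my_measurable_linear_image[OF lin bm] .
    have imgb: "L ` box l u \<in> sets borel"
      unfolding pre[symmetric] using measurable_sets[OF meas, of "box l u"] by simp
    have bdd: "bounded (L ` box l u)"
      using lin by (simp add: bounded_linear_image linear_linear)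
    have "emeasure (distr lborel borel L) (box l u) = emeasure lborel (L -` box l u)"
      by (simp add: emeasure_distr)
    also have "\<dots> = ennreal (measure lborel (L -` box l u))"
      using emeasure_bounded_finite[OF bdd] pre by (simp add: emeasure_eq_ennreal_measure)
    also have "\<dots> = ennreal (measure lebesgue (L ` box l u))"
      using imgb pre by simp
    also have "\<dots> = ennreal (measure lebesgue (box l u))"
      using my_measure_linear_image[OF lin bm] detm by simp
    also have "\<dots> = emeasure lborel (box l u)"
      using emeasure_bounded_finite[of "box l u"] by (simp add: emeasure_eq_ennreal_measure)
    also have "\<dots> = (\<Prod>b\<in>Basis. (u - l) \<bullet> b)"
      using le by (simp add: emeasure_lborel_box_eq)
    finally show "emeasure (distr lborel borel L) (box l u) = (\<Prod>b\<in>Basis. (u - l) \<bullet> b)" .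
  qed
qed

lemma inv_exists_ker:
  fixes A :: "real^'n^'n"
  assumes "\<And>x. A *v x = 0 \<Longrightarrow> x = 0"
  shows "A ** matrix_inv A = mat 1 \<and> matrix_inv A ** A = mat 1"
proof -
  obtain B where B: "B ** A = mat 1"
    using matrix_left_invertible_ker[of A] assms by blast
  then have "A ** B = mat 1" using matrix_left_right_inverse by blast
  with B have "\<exists>A'. A ** A' = mat 1 \<and> A' ** A = mat 1" by blast
  then show ?thesis unfolding matrix_inv_def by (rule someI_ex)
qed

lemma sym_pos_inv:
  fixes S :: "real^'n^'n"
  assumes "sym_pos_def S"
  defines "Th \<equiv> matrix_inv S"
  shows "S ** Th = mat 1" "Th ** S = mat 1" "transpose Th = Th"
    "\<And>x. x \<noteq> 0 \<Longrightarrow> x \<bullet> (Th *v x) > 0"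
proof -
  have symS: "transpose S = S" and pd: "\<And>x. x \<noteq> 0 \<Longrightarrow> x \<bullet> (S *v x) > 0"
    using assms(1) unfolding sym_pos_def_def by auto
  have ker: "x = 0" if "S *v x = 0" for x
    using pd[of x] that by (cases "x = 0") auto
  show 1: "S ** Th = mat 1" and 2: "Th ** S = mat 1"
    using inv_exists_ker[of S] ker unfolding Th_def by auto
  have "transpose Th ** S = mat 1"
    using 1 symS by (metis matrix_transpose_mul transpose_mat)
  then have "transpose Th = transpose Th ** (S ** Th)" using 1 by simp
  also have "\<dots> = Th" using \<open>transpose Th ** S = mat 1\<close> by (simp add: matrix_mul_assoc)
  finally show symT: "transpose Th = Th" .
  fix x :: "real^'n" assume "x \<noteq> 0"
  define y where "y = Th *v x"
  have xy: "x = S *v y" unfolding y_def using 1 by (simp add: matrix_vector_mul_assoc)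
  have "y \<noteq> 0" using \<open>x \<noteq> 0\<close> xy by auto
  have "x \<bullet> (Th *v x) = (S *v y) \<bullet> y" using xy y_def by simp
  also have "\<dots> = y \<bullet> (S *v y)" by (simp add: inner_commute)
  finally show "x \<bullet> (Th *v x) > 0" using pd[OF \<open>y \<noteq> 0\<close>] by simp
qed

lemma quad_lower_bound:
  fixes Th :: "real^'n^'n"
  assumes pd: "\<And>x. x \<noteq> 0 \<Longrightarrow> x \<bullet> (Th *v x) > 0"
  obtains c where "c > 0" "\<And>x. x \<bullet> (Th *v x) \<ge> c * (norm x)^2"
proof -
  let ?q = "\<lambda>x::real^'n. x \<bullet> (Th *v x)"
  have cont: "continuous_on (sphere 0 1) ?q"
    by (intro continuous_intros linear_continuous_on linear_linear[THEN iffD1] matrix_vector_mul_linear)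
  have ne: "sphere (0::real^'n) 1 \<noteq> {}"
    using vector_choose_size[of 1] by (auto simp: sphere_def)
  obtain x0 where x0: "x0 \<in> sphere 0 1" and mn: "\<And>y. y \<in> sphere 0 1 \<Longrightarrow> ?q x0 \<le> ?q y"
    using continuous_attains_inf[OF compact_sphere ne cont] by blast
  have "x0 \<noteq> 0" using x0 by auto
  then have c0: "?q x0 > 0" by (rule pd)
  show ?thesis
  proof (rule that[OF c0])
    fix x :: "real^'n"
    show "?q x \<ge> ?q x0 * (norm x)^2"
    proof (cases "x = 0")
      case True then show ?thesis by simp
    next
      case False
      define u where "u = (1 / norm x) *\<^sub>R x"
      have "u \<in> sphere 0 1" using False by (simp add: u_def)
      then have "?q x0 \<le> ?q u" by (rule mn)
      have xu: "x = norm x *\<^sub>R u" using False by (simp add: u_def)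
      have "?q x = (norm x)^2 * ?q u"
        by (subst xu, subst xu) (simp add: matrix_vector_mult_scaleR power2_eq_square)
      have "?q x0 * (norm x)^2 \<le> ?q u * (norm x)^2"
        using \<open>?q x0 \<le> ?q u\<close> by (rule mult_right_mono) simp
      then show ?thesis using \<open>?q x = (norm x)^2 * ?q u\<close>
        by (simp add: mult.commute)
    qed
  qed
qed

definition QD :: "real^'n^'n \<Rightarrow> 'n set \<Rightarrow> real^'n^'n" where
  "QD Th D = (\<chi> a b. if a \<in> D \<and> b \<in> D then Th$a$b else if a = b then 1 else 0)"
definition vvD :: "real^'n^'n \<Rightarrow> 'n set \<Rightarrow> 'n set \<Rightarrow> real^'n \<Rightarrow> real^'n" where
  "vvD Th D C x = (\<chi> a. if a \<in> D then (\<Sum>c\<in>C. Th$a$c * x$c) else 0)"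
definition uuD :: "real^'n^'n \<Rightarrow> 'n set \<Rightarrow> 'n set \<Rightarrow> real^'n \<Rightarrow> real^'n" where
  "uuD Th D C x = (\<chi> a. if a \<in> D then x$a + (matrix_inv (QD Th D) *v vvD Th D C x)$a else 0)"
definition TT :: "real^'n^'n \<Rightarrow> 'n set \<Rightarrow> 'n set \<Rightarrow> real^'n \<Rightarrow> real^'n" where
  "TT Th D C x = x - 2 *\<^sub>R uuD Th D C x"

lemma sum_split_D:
  fixes g :: "'n::finite \<Rightarrow> real"
  shows "(\<Sum>b\<in>UNIV. g b) = (\<Sum>b\<in>D. g b) + (\<Sum>b\<in>-D. g b)"
  by (metis Compl_eq_Diff_UNIV finite sum.subset_diff top_greatest add.commute)

lemma QD_ker:
  fixes Th :: "real^'n^'n"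
  assumes pd: "\<And>x. x \<noteq> 0 \<Longrightarrow> x \<bullet> (Th *v x) > 0"
    and Qx: "QD Th D *v x = 0"
  shows "x = 0"
proof -
  have off: "x$a = 0" if "a \<notin> D" for a
  proof -
    have e: "\<And>j. QD Th D $ a $ j * x$j = (if a = j then x$j else 0)"
      using that by (simp add: QD_def)
    have "(QD Th D *v x)$a = (\<Sum>j\<in>UNIV. QD Th D $ a $ j * x$j)"
      by (simp add: matrix_vector_mult_def)
    also have "\<dots> = x$a" by (simp add: e)
    finally show ?thesis using Qx by simp
  qed
  have on: "(Th *v x)$a = 0" if "a \<in> D" for a
  proof -
    have "(Th *v x)$a = (\<Sum>b\<in>UNIV. Th$a$b * x$b)" by (simp add: matrix_vector_mult_def)
    also have "\<dots> = (\<Sum>b\<in>UNIV. QD Th D $a$b * x$b)"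
      using that off by (auto simp: QD_def intro!: sum.cong)
    also have "\<dots> = (QD Th D *v x)$a" by (simp add: matrix_vector_mult_def)
    finally show ?thesis using Qx by simp
  qed
  have "x \<bullet> (Th *v x) = (\<Sum>a\<in>UNIV. x$a * (Th *v x)$a)" by (simp add: inner_vec_def)
  also have "\<dots> = 0" using off on by (intro sum.neutral) (metis mult_eq_0_iff)
  finally show ?thesis using pd[of x] by fastforce
qed

lemma QD_inv:
  fixes Th :: "real^'n^'n"
  assumes pd: "\<And>x. x \<noteq> 0 \<Longrightarrow> x \<bullet> (Th *v x) > 0"
  shows "QD Th D *v (matrix_inv (QD Th D) *v w) = w"
  using inv_exists_ker[of "QD Th D"] QD_ker[OF pd]
  by (simp add: matrix_vector_mul_assoc)

lemma TT_fix:
  assumes "i \<notin> D" shows "TT Th D C x $ i = x $ i"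
  using assms by (simp add: TT_def uuD_def)

lemma vvD_TT:
  assumes "D \<inter> C = {}" shows "vvD Th D C (TT Th D C x) = vvD Th D C x"
proof -
  have "\<And>c. c \<in> C \<Longrightarrow> TT Th D C x $ c = x $ c" using assms TT_fix by blast
  then show ?thesis unfolding vvD_def by (auto simp: vec_eq_iff intro!: sum.cong)
qed

lemma TT_invol:
  assumes "D \<inter> C = {}" shows "TT Th D C (TT Th D C x) = x"
proof -
  have h: "vvD Th D C (TT Th D C x) = vvD Th D C x" by (rule vvD_TT[OF assms])
  have "TT Th D C (TT Th D C x) = TT Th D C x - 2 *\<^sub>R (\<chi> a. if a \<in> D then (TT Th D C x)$a + (matrix_inv (QD Th D) *v vvD Th D C x)$a else 0)"
    by (simp only: TT_def[of _ _ _ "TT Th D C x"] uuD_def[of _ _ _ "TT Th D C x"] h)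
  define w where "w = matrix_inv (QD Th D) *v vvD Th D C x"
  have t1: "TT Th D C x $ i = - x$i - 2 * w$i" if "i \<in> D" for i
    using that by (simp add: TT_def uuD_def w_def algebra_simps)
  have t2: "TT Th D C (TT Th D C x) $ i = - TT Th D C x $ i - 2 * w$i" if "i \<in> D" for i
    using that by (subst \<open>TT Th D C (TT Th D C x) = _\<close>) (simp add: w_def algebra_simps)
  show ?thesis
  proof (rule iffD2[OF vec_eq_iff], rule allI)
    fix i show "TT Th D C (TT Th D C x) $ i = x $ i"
      by (cases "i \<in> D") (simp_all add: t1 t2 TT_fix)
  qed
qed

lemma TT_sum:
  assumes "a \<in> D"
  shows "x$a + TT Th D C x $a = -2 * (matrix_inv (QD Th D) *v vvD Th D C x)$a"
  using assms by (simp add: TT_def uuD_def algebra_simps)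

lemma vvD_linear: "linear (vvD Th D C)"
  by (rule linearI) (auto simp: vvD_def vec_eq_iff sum.distrib sum_distrib_left algebra_simps)

lemma TT_linear: "linear (TT Th D C)"
proof -
  have l1: "linear (\<lambda>x. matrix_inv (QD Th D) *v vvD Th D C x)"
    using linear_compose[OF vvD_linear matrix_vector_mul_linear] by (simp add: o_def)
  have "linear (uuD Th D C)"
    using l1 unfolding uuD_def linear_iff
    by (auto simp: vec_eq_iff algebra_simps)
  then have a1: "uuD Th D C (x + y) = uuD Th D C x + uuD Th D C y"
    and a2: "uuD Th D C (c *\<^sub>R x) = c *\<^sub>R uuD Th D C x" for x y c
    by (simp_all add: linear_iff)
  show ?thesis unfolding linear_iff TT_def
    by (simp add: a1 a2 algebra_simps scaleR_right_diff_distrib)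
qed

lemma TT_quad:
  fixes Th :: "real^'n^'n"
  assumes symT: "transpose Th = Th"
    and pd: "\<And>x. x \<noteq> 0 \<Longrightarrow> x \<bullet> (Th *v x) > 0"
    and DC: "D \<inter> C = {}"
    and noedge: "\<And>a b. a \<in> D \<Longrightarrow> b \<notin> D \<Longrightarrow> b \<notin> C \<Longrightarrow> Th$a$b = 0"
  shows "TT Th D C x \<bullet> (Th *v TT Th D C x) = x \<bullet> (Th *v x)"
proof -
  define u where "u = uuD Th D C x"
  define w where "w = matrix_inv (QD Th D) *v vvD Th D C x"
  have symm: "p \<bullet> (Th *v q) = q \<bullet> (Th *v p)" for p q
    by (metis dot_lmul_matrix inner_commute symT transpose_matrix_vector)
  have key: "(Th *v (x - u))$a = 0" if a: "a \<in> D" for a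
  proof -
    have Qw: "(QD Th D *v w)$a = vvD Th D C x $ a"
      unfolding w_def using QD_inv[OF pd] by simp
    have "(QD Th D *v w)$a = (\<Sum>b\<in>UNIV. QD Th D$a$b * w$b)"
      by (simp add: matrix_vector_mult_def)
    also have "\<dots> = (\<Sum>b\<in>D. QD Th D$a$b * w$b) + (\<Sum>b\<in>-D. QD Th D$a$b * w$b)"
      by (rule sum_split_D)
    also have "(\<Sum>b\<in>-D. QD Th D$a$b * w$b) = 0"
      using a by (intro sum.neutral) (auto simp: QD_def)
    also have "(\<Sum>b\<in>D. QD Th D$a$b * w$b) = (\<Sum>b\<in>D. Th$a$b * w$b)"
      using a by (intro sum.cong) (auto simp: QD_def)
    finally have "(QD Th D *v w)$a = (\<Sum>b\<in>D. Th$a$b * w$b)" by simp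
    then have e1: "(\<Sum>b\<in>D. Th$a$b * w$b) = (\<Sum>c\<in>C. Th$a$c * x$c)"
      using Qw a by (simp add: vvD_def)
    have xu: "(x - u)$b = (if b \<in> D then - w$b else x$b)" for b
      by (simp add: u_def w_def uuD_def)
    have "(Th *v (x - u))$a = (\<Sum>b\<in>UNIV. Th$a$b * (x - u)$b)"
      by (simp add: matrix_vector_mult_def)
    also have "\<dots> = (\<Sum>b\<in>D. Th$a$b * (x - u)$b) + (\<Sum>b\<in>-D. Th$a$b * (x - u)$b)"
      by (rule sum_split_D)
    also have "\<dots> = (\<Sum>b\<in>D. Th$a$b * (- w$b)) + (\<Sum>b\<in>-D. Th$a$b * x$b)"
      by (intro arg_cong2[where f="(+)"] sum.cong) (auto simp: u_def w_def uuD_def)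
    also have "(\<Sum>b\<in>-D. Th$a$b * x$b) = (\<Sum>b\<in>C. Th$a$b * x$b)"
    proof -
      have "(\<Sum>b\<in>-D. Th$a$b * x$b) = (\<Sum>b\<in>C. Th$a$b * x$b) + (\<Sum>b\<in>-D-C. Th$a$b * x$b)"
        using DC by (subst sum.subset_diff[of C "-D"]) auto
      also have "(\<Sum>b\<in>-D-C. Th$a$b * x$b) = 0"
        using noedge[OF a] by (intro sum.neutral) auto
      finally show ?thesis by simp
    qed
    finally show ?thesis using e1 by (simp add: sum_negf)
  qed
  have uz: "u \<bullet> (Th *v (x - u)) = 0"
  proof -
    have "u \<bullet> (Th *v (x - u)) = (\<Sum>a\<in>UNIV. u$a * (Th *v (x - u))$a)" by (simp add: inner_vec_def)
    also have "\<dots> = 0"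
      using key by (intro sum.neutral) (auto simp: u_def uuD_def)
    finally show ?thesis .
  qed
  have T: "TT Th D C x = x - 2 *\<^sub>R u" by (simp add: TT_def u_def)
  have "(x - 2 *\<^sub>R u) \<bullet> (Th *v (x - 2 *\<^sub>R u))
      = x \<bullet> (Th *v x) - 4 * (u \<bullet> (Th *v (x - u)))"
    by (simp add: matrix_vector_mult_diff_distrib matrix_vector_mult_scaleR inner_diff_left inner_diff_right symm[of x u] algebra_simps)
  then show ?thesis using uz T by simp
qed

lemma reach_path:
  assumes "(\<lambda>a b. E a b \<and> a \<notin> C \<and> b \<notin> C)\<^sup>*\<^sup>* x y" "x \<notin> C"
  shows "\<exists>ps. is_path E ps x y \<and> set ps \<inter> C = {}"
  using assms(1)
proof (induction rule: rtranclp_induct)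
  case base
  have "is_path E [x] x x" by (simp add: is_path_def)
  then show ?case using assms(2) by auto
next
  case (step y z)
  obtain ps where ps: "is_path E ps x y" "set ps \<inter> C = {}" using step.IH by blast
  have ne: "ps \<noteq> []" and hd: "hd ps = x" and lst: "last ps = y" and dis: "distinct ps"
    and ed: "\<And>i. Suc i < length ps \<Longrightarrow> E (ps ! i) (ps ! Suc i)"
    using ps(1) unfolding is_path_def by auto
  have Eyz: "E y z" and zC: "z \<notin> C" using step.hyps(2) by auto
  show ?case
  proof (cases "z \<in> set ps")
    case True
    then obtain i where i: "i < length ps" "ps ! i = z" by (auto simp: in_set_conv_nth)
    define qs where "qs = take (Suc i) ps"
    have "qs \<noteq> []" using ne by (simp add: qs_def)
    moreover have "hd qs = x" using hd ne by (simp add: qs_def hd_take)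
    moreover have "last qs = z"
      using i by (simp add: qs_def take_Suc_conv_app_nth)
    moreover have "distinct qs" using dis by (simp add: qs_def)
    moreover have "\<forall>k. Suc k < length qs \<longrightarrow> E (qs ! k) (qs ! Suc k)"
      using ed i by (auto simp: qs_def)
    moreover have "set qs \<inter> C = {}" using ps(2) set_take_subset[of "Suc i" ps] by (auto simp: qs_def)
    ultimately show ?thesis unfolding is_path_def by blast
  next
    case False
    define qs where "qs = ps @ [z]"
    have "qs \<noteq> []" by (simp add: qs_def)
    moreover have "hd qs = x" using hd ne by (simp add: qs_def)
    moreover have "last qs = z" by (simp add: qs_def)
    moreover have "distinct qs" using dis False by (simp add: qs_def)
    moreover have "\<forall>k. Suc k < length qs \<longrightarrow> E (qs ! k) (qs ! Suc k)"
    proof (intro allI impI)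
      fix k assume k: "Suc k < length qs"
      show "E (qs ! k) (qs ! Suc k)"
      proof (cases "Suc k < length ps")
        case True then show ?thesis using ed[OF True] by (simp add: qs_def nth_append)
      next
        case False
        then have "Suc k = length ps" using k by (simp add: qs_def)
        then have kk: "k = length ps - 1" by simp
        have "qs ! k = y" using lst ne kk by (simp add: qs_def nth_append last_conv_nth)
        moreover have "qs ! Suc k = z" using \<open>Suc k = length ps\<close> by (simp add: qs_def nth_append)
        ultimately have "qs ! k = y" "qs ! Suc k = z" by auto
        then show ?thesis using Eyz by simp
      qed
    qed
    moreover have "set qs \<inter> C = {}" using ps(2) zC by (auto simp: qs_def)
    ultimately show ?thesis unfolding is_path_def by blast
  qed
qed

lemma graph_part:
  fixes Th :: "real^'d^'d"
  assumes sep: "separates (precision_edge Th) C j h"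
    and jC: "j \<notin> C"
  defines "D \<equiv> {b. (\<lambda>a b. precision_edge Th a b \<and> a \<notin> C \<and> b \<notin> C)\<^sup>*\<^sup>* j b}"
  shows "j \<in> D" "h \<notin> D" "D \<inter> C = {}"
    "\<And>a b. a \<in> D \<Longrightarrow> b \<notin> D \<Longrightarrow> b \<notin> C \<Longrightarrow> Th$a$b = 0"
proof -
  let ?R = "\<lambda>a b. precision_edge Th a b \<and> a \<notin> C \<and> b \<notin> C"
  show "j \<in> D" by (simp add: D_def)
  show "h \<notin> D"
  proof
    assume "h \<in> D"
    then have "?R\<^sup>*\<^sup>* j h" by (simp add: D_def)
    from reach_path[OF this jC] obtain ps where "is_path (precision_edge Th) ps j h" "set ps \<inter> C = {}"
      by blast
    then show False using sep unfolding separates_def by blast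
  qed
  show "D \<inter> C = {}"
  proof (rule ccontr)
    assume "D \<inter> C \<noteq> {}"
    then obtain b where b: "b \<in> D" "b \<in> C" by blast
    then have "?R\<^sup>*\<^sup>* j b" by (simp add: D_def)
    then show False using b(2) jC
      by (cases rule: rtranclp.cases) auto
  qed
  fix a b assume a: "a \<in> D" and b: "b \<notin> D" "b \<notin> C"
  show "Th$a$b = 0"
  proof (rule ccontr)
    assume nz: "Th$a$b \<noteq> 0"
    have "a \<noteq> b" using a b by auto
    have "a \<notin> C" using a \<open>D \<inter> C = {}\<close> by auto
    have r1: "?R a b" using nz \<open>a \<noteq> b\<close> \<open>a \<notin> C\<close> b by (simp add: precision_edge_def)
    have r2: "?R\<^sup>*\<^sup>* j a" using a by (simp add: D_def)
    have "?R\<^sup>*\<^sup>* j b" using rtranclp.rtrancl_into_rtrancl[OF r2 r1] .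
    then show False using b by (simp add: D_def)
  qed
qed

lemma exp_minus_set_integrable: "set_integrable lborel {0..} (\<lambda>u::real. exp (- u))"
proof -
  have ps: "prob_space (density lborel (exponential_density 1))"
    by (rule prob_space_exponential_density) simp
  have "emeasure (density lborel (exponential_density 1)) UNIV = 1"
    using prob_space.emeasure_space_1[OF ps] by simp
  then have nn: "(\<integral>\<^sup>+x. ennreal (exponential_density 1 x) \<partial>lborel) = 1"
    by (simp add: emeasure_density)
  have eq: "(\<lambda>u. indicator {0..} u *\<^sub>R exp (- u)) = exponential_density 1"
    by (auto simp: fun_eq_iff exponential_density_def indicator_def)
  have "integrable lborel (exponential_density 1)"
  proof (rule integrableI_nonneg)
    show "exponential_density 1 \<in> borel_measurable lborel" by simp
    show "AE x in lborel. 0 \<le> exponential_density 1 x" by (simp add: exponential_density_nonneg)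
    show "(\<integral>\<^sup>+x. ennreal (exponential_density 1 x) \<partial>lborel) < \<infinity>" using nn by simp
  qed
  then show ?thesis unfolding set_integrable_def eq .
qed

lemma aux_lin1:
  fixes P Q R S T V c :: real
  assumes "P \<le> Q" "Q = R" "S \<le> P" "S = T / 4" "c = (R + V) / 2" "V > 0"
  shows "T / 8 \<le> c"
  using assms by (simp add: field_simps)

lemma aux_lin2:
  fixes A B E c :: real
  assumes "c = (A + B) / 2" "A \<le> E" "B \<le> E"
  shows "c \<le> E"
  using assms by (simp add: field_simps)

lemma cosh_quad_bound:
  fixes u :: real assumes u: "u \<ge> 0" shows "cosh u \<ge> u^2 / 8"
proof -
  have e1: "exp (u/2) \<ge> 1 + u/2" by (rule exp_ge_add_one_self)
  have e2: "(1 + u/2)^2 \<le> (exp (u/2))^2" by (rule power_mono[OF e1]) (use u in simp)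
  have e3: "(exp (u/2))^2 = exp u" by (simp add: power2_eq_square flip: exp_add)
  have e4: "(u/2)^2 \<le> (1 + u/2)^2" by (rule power_mono) (use u in auto)
  have e5: "(u/2)^2 = u^2 / 4" by (simp add: power_divide)
  have e6: "cosh u = (exp u + exp (- u)) / 2" by (simp add: cosh_def)
  have e7: "exp (- u) > 0" by simp
  show ?thesis by (rule aux_lin1[OF e2 e3 e4 e5 e6 e7])
qed

lemma cosh_le_exp_abs:
  fixes z :: real shows "cosh z \<le> exp \<bar>z\<bar>"
proof -
  have a: "exp z \<le> exp \<bar>z\<bar>" "exp (- z) \<le> exp \<bar>z\<bar>" by auto
  have "cosh z = (exp z + exp (- z)) / 2" by (simp add: cosh_def)
  then show ?thesis using aux_lin2 a by blast
qed

lemma bessel_integrand_bound: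
  fixes x \<nu> u :: real
  assumes x: "x > 0" and u: "u \<ge> 0"
  shows "exp (- x * cosh u) * cosh (\<nu> * u) \<le> exp (2 * (\<bar>\<nu>\<bar> + 1)^2 / x) * exp (- u)"
proof -
  define b where "b = \<bar>\<nu>\<bar> + 1"
  have "cosh (\<nu> * u) \<le> exp (\<bar>\<nu>\<bar> * u)"
    using cosh_le_exp_abs[of "\<nu> * u"] u by (simp add: abs_mult)
  then have "exp (- x * cosh u) * cosh (\<nu> * u) \<le> exp (- x * cosh u) * exp (\<bar>\<nu>\<bar> * u)"
    by (intro mult_left_mono) auto
  then have 1: "exp (- x * cosh u) * cosh (\<nu> * u) \<le> exp (- x * cosh u + \<bar>\<nu>\<bar> * u)"
    by (simp only: exp_add)
  have c: "- x * cosh u \<le> - x * (u^2 / 8)"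
    using cosh_quad_bound[OF u] x by simp
  have sq: "x * (x * u^2 / 8 - b * u + 2 * b^2 / x) = (x * u - 4 * b)^2 / 8"
    using x by (simp add: field_simps power2_eq_square)
  have "x * (x * u^2 / 8 - b * u + 2 * b^2 / x) \<ge> 0" unfolding sq by simp
  then have q: "x * u^2 / 8 - b * u + 2 * b^2 / x \<ge> 0"
    using x by (simp add: zero_le_mult_iff)
  have "- x * cosh u + \<bar>\<nu>\<bar> * u \<le> 2 * b^2 / x + (- u)"
    using c q by (simp add: b_def algebra_simps)
  then have "exp (- x * cosh u + \<bar>\<nu>\<bar> * u) \<le> exp (2 * b^2 / x + (- u))" by simp
  also have "\<dots> = exp (2 * (\<bar>\<nu>\<bar> + 1)^2 / x) * exp (- u)" unfolding b_def by (rule exp_add)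
  finally show ?thesis using 1 by linarith
qed

lemma bessel_integrand_meas[measurable]:
  "(\<lambda>u::real. exp (- x * cosh u) * cosh (\<nu> * u)) \<in> borel_measurable lborel"
proof -
  have "(\<lambda>u::real. exp (- x * cosh u) * cosh (\<nu> * u)) \<in> borel_measurable borel"
    by (intro borel_measurable_continuous_onI continuous_intros)
  then show ?thesis by simp
qed

lemma bessel_integrable:
  fixes x \<nu> :: real assumes x: "x > 0"
  shows "set_integrable lborel {0..} (\<lambda>u. exp (- x * cosh u) * cosh (\<nu> * u))"
proof (rule set_integrable_bound[OF set_integrable_mult_right[OF exp_minus_set_integrable]])
  show "set_borel_measurable lborel {0..} (\<lambda>u. exp (- x * cosh u) * cosh (\<nu> * u))"
    unfolding set_borel_measurable_def by measurable
  show "AE u in lborel. u \<in> {0..} \<longrightarrow> norm (exp (- x * cosh u) * cosh (\<nu> * u))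
          \<le> norm (exp (2 * (\<bar>\<nu>\<bar> + 1)^2 / x) * exp (- u))"
    using bessel_integrand_bound[OF x] by (auto intro!: AE_I2)
qed

lemma besselK_nonneg: "besselK \<nu> x \<ge> 0"
  unfolding besselK_def set_lebesgue_integral_def
  by (intro Bochner_Integration.integral_nonneg_AE AE_I2) (simp add: indicator_def)

lemma besselK_decay:
  fixes s s0 \<nu> :: real
  assumes s0: "s0 > 0" and s: "s \<ge> s0"
  shows "besselK \<nu> s \<le> exp (- (s - s0)) * besselK \<nu> s0"
proof -
  have "besselK \<nu> s \<le> (LBINT u:{0..}. exp (- (s - s0)) * (exp (- s0 * cosh u) * cosh (\<nu> * u)))"
    unfolding besselK_def
  proof (rule set_integral_mono)
    show "set_integrable lborel {0..} (\<lambda>u. exp (- s * cosh u) * cosh (\<nu> * u))"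
      using s s0 by (intro bessel_integrable) simp
    show "set_integrable lborel {0..} (\<lambda>u. exp (- (s - s0)) * (exp (- s0 * cosh u) * cosh (\<nu> * u)))"
      using s0 by (intro set_integrable_mult_right bessel_integrable)
    fix u :: real
    have "(s - s0) * 1 \<le> (s - s0) * cosh u"
      using s cosh_real_ge_1[of u] by (intro mult_left_mono) auto
    then have "exp (- s * cosh u) \<le> exp (- (s - s0)) * exp (- s0 * cosh u)"
      by (simp add: exp_add[symmetric] algebra_simps)
    then show "exp (- s * cosh u) * cosh (\<nu> * u) \<le> exp (- (s - s0)) * (exp (- s0 * cosh u) * cosh (\<nu> * u))"
      by (simp add: mult_right_mono)
  qed
  also have "\<dots> = exp (- (s - s0)) * besselK \<nu> s0"
    unfolding besselK_def by simp
  finally show ?thesis .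
qed

lemma exp_abs_nn_finite:
  fixes a :: real assumes a: "a > 0"
  shows "(\<integral>\<^sup>+t. ennreal (exp (- a * \<bar>t\<bar>)) \<partial>lborel) < \<infinity>"
proof -
  let ?ed = "exponential_density a"
  have ps: "prob_space (density lborel ?ed)"
    by (rule prob_space_exponential_density) (rule a)
  have "emeasure (density lborel ?ed) UNIV = 1"
    using prob_space.emeasure_space_1[OF ps] by simp
  then have n1: "(\<integral>\<^sup>+x. ennreal (?ed x) \<partial>lborel) = 1"
    by (simp add: emeasure_density)
  have n2: "(\<integral>\<^sup>+x. ennreal (?ed (- x)) \<partial>lborel) = 1"
  proof -
    have "(\<integral>\<^sup>+x. ennreal (?ed (- x)) \<partial>lborel) = (\<integral>\<^sup>+x. ennreal (?ed x) \<partial>(distr lborel borel uminus))"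
      by (simp add: nn_integral_distr)
    also have "\<dots> = 1" using n1 by (simp add: lborel_distr_uminus)
    finally show ?thesis .
  qed
  have pt: "ennreal (exp (- a * \<bar>t\<bar>)) \<le> ennreal (1 / a) * (ennreal (?ed t) + ennreal (?ed (- t)))" for t
  proof -
    have "exp (- a * \<bar>t\<bar>) \<le> (1 / a) * (?ed t + ?ed (- t))"
      using a by (auto simp: exponential_density_def field_simps abs_if)
    then have "ennreal (exp (- a * \<bar>t\<bar>)) \<le> ennreal ((1 / a) * (?ed t + ?ed (- t)))"
      by (rule ennreal_leI)
    also have "\<dots> = ennreal (1 / a) * (ennreal (?ed t) + ennreal (?ed (- t)))"
      using a by (simp only: ennreal_mult[of "1/a"] ennreal_plus exponential_density_nonneg
          add_nonneg_nonneg divide_nonneg_nonneg less_imp_le zero_le_one)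
    finally show ?thesis .
  qed
  have "(\<integral>\<^sup>+t. ennreal (exp (- a * \<bar>t\<bar>)) \<partial>lborel)
      \<le> (\<integral>\<^sup>+t. ennreal (1 / a) * (ennreal (?ed t) + ennreal (?ed (- t))) \<partial>lborel)"
    by (intro nn_integral_mono pt)
  also have "\<dots> = ennreal (1 / a) * ((\<integral>\<^sup>+t. ennreal (?ed t) \<partial>lborel) + (\<integral>\<^sup>+t. ennreal (?ed (- t)) \<partial>lborel))"
    by (simp add: nn_integral_cmult nn_integral_add)
  also have "\<dots> = ennreal (1 / a) * 2" using n1 n2 by simp
  also have "\<dots> < \<infinity>" by (simp add: ennreal_mult_less_top)
  finally show ?thesis .
qed

lemma exp_norm_nn_finite:
  fixes b :: real assumes b: "b > 0"
  shows "(\<integral>\<^sup>+y. ennreal (exp (- b * norm (y::'a::euclidean_space))) \<partial>lborel) < \<infinity>"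
proof -
  define n where "n = real DIM('a)"
  have n: "n > 0" by (simp add: n_def)
  define a where "a = b / n"
  have a: "a > 0" using b n by (simp add: a_def)
  have pt: "ennreal (exp (- b * norm y)) \<le> (\<Prod>i\<in>Basis. ennreal (exp (- a * \<bar>y \<bullet> i\<bar>)))" for y :: 'a
  proof -
    have "(\<Sum>i\<in>Basis. a * \<bar>y \<bullet> i\<bar>) \<le> of_nat (card (Basis::'a set)) * (a * norm y)"
      by (rule sum_bounded_above) (use a Basis_le_norm in \<open>auto intro: mult_left_mono\<close>)
    also have "\<dots> = b * norm y" using n by (simp add: a_def n_def)
    finally have le: "(\<Sum>i\<in>Basis. a * \<bar>y \<bullet> i\<bar>) \<le> b * norm y" .
    have "exp (- b * norm y) \<le> exp (\<Sum>i\<in>Basis. - a * \<bar>y \<bullet> i\<bar>)"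
      using le by (simp add: sum_negf)
    also have "\<dots> = (\<Prod>i\<in>Basis. exp (- a * \<bar>y \<bullet> i\<bar>))" by (rule exp_sum) simp
    finally have "ennreal (exp (- b * norm y)) \<le> ennreal (\<Prod>i\<in>Basis. exp (- a * \<bar>y \<bullet> i\<bar>))"
      by (rule ennreal_leI)
    also have "\<dots> = (\<Prod>i\<in>Basis. ennreal (exp (- a * \<bar>y \<bullet> i\<bar>)))"
      by (rule prod_ennreal[symmetric]) simp
    finally show ?thesis .
  qed
  have "(\<integral>\<^sup>+y. ennreal (exp (- b * norm (y::'a))) \<partial>lborel)
      \<le> (\<integral>\<^sup>+y. (\<Prod>i\<in>Basis. ennreal (exp (- a * \<bar>(y::'a) \<bullet> i\<bar>))) \<partial>lborel)"
    by (rule nn_integral_mono) (rule pt)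
  also have "\<dots> = (\<Prod>i\<in>(Basis::'a set). (\<integral>\<^sup>+t. ennreal (exp (- a * \<bar>t\<bar>)) \<partial>lborel))"
    by (rule nn_integral_lborel_prod) auto
  also have "\<dots> < \<infinity>"
    using exp_abs_nn_finite[OF a] by (simp add: power_less_top_ennreal)
  finally show ?thesis .
qed

lemma sq_sum_le: fixes a b :: real shows "(a+b)^2 \<le> 2*a^2 + 2*b^2"
proof -
  have "0 \<le> (a-b)^2" by simp
  then show ?thesis by (simp add: power2_eq_square algebra_simps)
qed

lemma bounded_on_ray:
  fixes G :: "real \<Rightarrow> real"
  assumes lim: "(G \<longlongrightarrow> 0) at_top" and cont: "continuous_on {s0..} G"
  obtains M where "M \<ge> 0" "\<And>s. s \<ge> s0 \<Longrightarrow> \<bar>G s\<bar> \<le> M"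
proof -
  have "eventually (\<lambda>s. dist (G s) 0 < 1) at_top"
    using lim by (rule tendstoD) simp
  then obtain S1 where S1: "\<And>s. s \<ge> S1 \<Longrightarrow> \<bar>G s\<bar> < 1"
    by (auto simp: eventually_at_top_linorder)
  have "continuous_on {s0..max s0 S1} G" using cont by (rule continuous_on_subset) auto
  then have "compact (G ` {s0..max s0 S1})" by (intro compact_continuous_image) auto
  then obtain B where B: "\<And>x. x \<in> G ` {s0..max s0 S1} \<Longrightarrow> norm x \<le> B"
    using compact_imp_bounded bounded_iff by metis
  show ?thesis
  proof (rule that[of "max 1 B"])
    show "max 1 B \<ge> 0" by simp
    fix s assume s: "s \<ge> s0"
    show "\<bar>G s\<bar> \<le> max 1 B"
    proof (cases "s \<ge> S1")
      case True then show ?thesis using S1[of s] by simp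
    next
      case False
      then have "s \<in> {s0..max s0 S1}" using s by auto
      then have "norm (G s) \<le> B" using B by blast
      then show ?thesis by simp
    qed
  qed
qed

lemma GH_bound:
  fixes \<mu> :: "real^'d" and Sg :: "real^'d^'d"
  assumes c: "c > 0" and qb: "\<And>x. x \<bullet> (matrix_inv Sg *v x) \<ge> c * (norm x)^2"
    and chi: "chi > 0" and psi: "psi > 0" and det: "det Sg \<ge> 0"
  obtains K b where "b > 0" "\<And>y. 0 \<le> GH_density \<mu> Sg lam chi psi y"
     "\<And>y. (1 + (norm y)^2) * GH_density \<mu> Sg lam chi psi y \<le> K * exp (- b * norm y)"
proof -
  define Th where "Th = matrix_inv Sg"
  define d where "d = real CARD('d)"
  define dl where "dl y = (y - \<mu>) \<bullet> (Th *v (y - \<mu>))" for y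
  define s where "s y = sqrt ((chi + dl y) * psi)" for y
  define s0 where "s0 = sqrt (chi * psi)"
  define K0 where "K0 = 1 / ((2 * pi) powr (d / 2) * sqrt (det Sg) * besselK lam (sqrt (psi * chi)))"
  define \<nu> where "\<nu> = lam - d / 2"
  define q where "q = (lam - d / 2) / 2"
  define A where "A = 1 + 2 * (norm \<mu>)^2"
  define B where "B = 2 / (c * psi)"
  define G where "G t = (A + B * t^2) * (t^2 / psi^2) powr q * exp (- t / 2)" for t
  define b where "b = sqrt (c * psi) / 2"
  have GHe: "GH_density \<mu> Sg lam chi psi y = K0 * ((chi + dl y) / psi) powr q * besselK \<nu> (s y)" for y
    by (simp add: GH_density_def Let_def K0_def dl_def s_def \<nu>_def q_def d_def Th_def)
  have K0: "K0 \<ge> 0"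
    unfolding K0_def using det by (intro divide_nonneg_nonneg mult_nonneg_nonneg besselK_nonneg) auto
  have dl0: "dl y \<ge> c * (norm (y - \<mu>))^2" for y
    unfolding dl_def Th_def using qb .
  have dlnn: "dl y \<ge> 0" for y using dl0[of y] c by (smt (verit) mult_nonneg_nonneg zero_le_power2)
  have s0: "s0 > 0" using chi psi by (simp add: s0_def)
  have sge: "s y \<ge> s0" for y
    unfolding s_def s0_def using dlnn[of y] psi by (intro real_sqrt_le_mono mult_right_mono) auto
  have s2: "(s y)^2 = (chi + dl y) * psi" for y
    unfolding s_def using dlnn[of y] chi psi by simp
  have ratio: "(chi + dl y) / psi = (s y)^2 / psi^2" for y
    using s2[of y] psi by (simp add: power2_eq_square field_simps)
  have lim: "(G \<longlongrightarrow> 0) at_top"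
    unfolding G_def using psi by real_asymp
  have cont: "continuous_on {s0..} G"
    unfolding G_def using s0 psi by (intro continuous_intros) auto
  obtain M where M0: "M \<ge> 0" and M: "\<And>t. t \<ge> s0 \<Longrightarrow> \<bar>G t\<bar> \<le> M"
    using bounded_on_ray[OF lim cont] by blast
  have b: "b > 0" using c psi by (simp add: b_def)
  define K where "K = K0 * besselK \<nu> s0 * exp s0 * M * exp (b * norm \<mu>)"
  show ?thesis
  proof (rule that[of b K])
    show "b > 0" by (rule b)
    fix y
    have Pnn: "((chi + dl y) / psi) powr q \<ge> 0" by simp
    show "0 \<le> GH_density \<mu> Sg lam chi psi y"
      unfolding GHe using K0 Pnn besselK_nonneg by simp
    define S where "S = s y"
    have S0: "S \<ge> s0" using sge by (simp add: S_def)
    have Spos: "S > 0" using S0 s0 by simp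
    have n1: "norm y \<le> norm (y - \<mu>) + norm \<mu>"
      using norm_triangle_ineq[of "y - \<mu>" \<mu>] by simp
    have n2: "(norm y)^2 \<le> 2 * (norm (y - \<mu>))^2 + 2 * (norm \<mu>)^2"
    proof -
      have "(norm y)^2 \<le> (norm (y - \<mu>) + norm \<mu>)^2" using n1 by (simp add: power_mono)
      also have "\<dots> \<le> 2 * (norm (y - \<mu>))^2 + 2 * (norm \<mu>)^2"
        by (rule sq_sum_le)
      finally show ?thesis .
    qed
    have n3a: "psi * (c * (norm (y - \<mu>))^2) \<le> psi * dl y"
      using dl0[of y] psi by (intro mult_left_mono) auto
    have n3b: "0 \<le> chi * psi" using chi psi by simp
    have n3c: "psi * (c * (norm (y - \<mu>))^2) \<le> S^2"
      using n3a n3b s2[of y] by (simp add: S_def algebra_simps)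
    have n3: "c * (norm (y - \<mu>))^2 \<le> S^2 / psi"
      using n3c psi by (simp add: field_simps)
    have n4: "(norm (y - \<mu>))^2 \<le> S^2 / (c * psi)"
      using n3 c psi by (simp add: field_simps)
    have h1: "1 + (norm y)^2 \<le> A + B * S^2"
      using n2 n4 by (simp add: A_def B_def field_simps)
    have h1nn: "0 \<le> 1 + (norm y)^2" by simp
    have h2: "besselK \<nu> S \<le> exp (- (S - s0)) * besselK \<nu> s0"
      by (rule besselK_decay[OF s0 S0])
    have P: "((chi + dl y) / psi) powr q = (S^2 / psi^2) powr q" by (simp add: ratio S_def)
    have "(1 + (norm y)^2) * GH_density \<mu> Sg lam chi psi y
        = (1 + (norm y)^2) * (K0 * (S^2 / psi^2) powr q * besselK \<nu> S)"
      by (simp add: GHe P S_def)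
    also have "\<dots> \<le> (A + B * S^2) * (K0 * (S^2 / psi^2) powr q * (exp (- (S - s0)) * besselK \<nu> s0))"
      using h1 h2 K0 besselK_nonneg[of \<nu> S]
      by (intro mult_mono mult_left_mono) (auto intro: mult_nonneg_nonneg add_nonneg_nonneg simp: B_def A_def c psi less_imp_le)
    also have "\<dots> = K0 * besselK \<nu> s0 * exp s0 * G S * exp (- S / 2)"
    proof -
      have "exp (- (S - s0)) = exp s0 * exp (- S / 2) * exp (- S / 2)"
        by (simp flip: exp_add)
      then show ?thesis by (simp add: G_def algebra_simps)
    qed
    also have "\<dots> \<le> K0 * besselK \<nu> s0 * exp s0 * M * exp (- S / 2)"
      using M[OF S0] K0 besselK_nonneg[of \<nu> s0]
      by (intro mult_right_mono mult_left_mono) auto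
    also have "\<dots> \<le> K0 * besselK \<nu> s0 * exp s0 * M * (exp (b * norm \<mu>) * exp (- b * norm y))"
    proof -
      have sq: "sqrt (c * psi) * norm (y - \<mu>) \<le> S"
      proof -
        have "sqrt (c * psi) * norm (y - \<mu>) = sqrt (c * psi * (norm (y - \<mu>))^2)"
          using c psi by (simp add: real_sqrt_mult)
        also have "\<dots> \<le> sqrt ((chi + dl y) * psi)"
          using n3c s2[of y] by (intro real_sqrt_le_mono) (simp add: S_def algebra_simps)
        finally show ?thesis by (simp add: S_def s_def)
      qed
      have "norm y - norm \<mu> \<le> norm (y - \<mu>)" using n1 by simp
      then have "sqrt (c * psi) * (norm y - norm \<mu>) \<le> sqrt (c * psi) * norm (y - \<mu>)"
        using c psi by (intro mult_left_mono) auto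
      then have "- S / 2 \<le> b * norm \<mu> + (- b * norm y)"
        using sq by (simp add: b_def field_simps)
      then have "exp (- S / 2) \<le> exp (b * norm \<mu>) * exp (- b * norm y)"
        by (simp flip: exp_add)
      then show ?thesis using M0 K0 besselK_nonneg[of \<nu> s0]
        by (intro mult_left_mono) auto
    qed
    also have "\<dots> = K * exp (- b * norm y)" by (simp add: K_def)
    finally show "(1 + (norm y)^2) * GH_density \<mu> Sg lam chi psi y \<le> K * exp (- b * norm y)" .
  qed
qed

lemma distr_density_invariant:
  fixes T :: "'a::euclidean_space \<Rightarrow> 'a" and f :: "'a \<Rightarrow> ennreal"
  assumes Tm[measurable]: "T \<in> borel_measurable borel" and TL: "distr lborel borel T = lborel"
    and fm[measurable]: "f \<in> borel_measurable borel" and fT: "\<And>y. f (T y) = f y"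
  shows "distr (density lborel f) lborel T = density lborel f"
proof (rule measure_eqI)
  show "sets (distr (density lborel f) lborel T) = sets (density lborel f)" by simp
  fix B assume "B \<in> sets (distr (density lborel f) lborel T)"
  then have B[measurable]: "B \<in> sets borel" by simp
  have "emeasure (distr (density lborel f) lborel T) B = emeasure (density lborel f) (T -` B)"
    by (subst emeasure_distr) auto
  also have "\<dots> = (\<integral>\<^sup>+y. f y * indicator (T -` B) y \<partial>lborel)"
    by (subst emeasure_density) (auto simp: measurable_sets_borel[OF Tm B])
  also have "\<dots> = (\<integral>\<^sup>+y. f (T y) * indicator B (T y) \<partial>lborel)"
    by (simp add: fT indicator_def)
  also have "\<dots> = (\<integral>\<^sup>+z. f z * indicator B z \<partial>(distr lborel borel T))"
    by (subst nn_integral_distr) auto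
  also have "\<dots> = emeasure (density lborel f) B"
    by (simp add: TL emeasure_density)
  finally show "emeasure (distr (density lborel f) lborel T) B = emeasure (density lborel f) B" .
qed

lemma GH_moments:
  fixes f :: "real^'d \<Rightarrow> real"
  assumes fm[measurable]: "f \<in> borel_measurable borel" and nn: "\<And>y. 0 \<le> f y"
    and bd: "\<And>y. (1 + (norm y)^2) * f y \<le> K * exp (- b * norm y)" and b: "b > 0"
  shows "integrable (density lborel (\<lambda>y. ennreal (f y))) (\<lambda>y. y$i * y$i')"
    and "integrable (density lborel (\<lambda>y. ennreal (f y))) (\<lambda>y. y$i)"
proof -
  have K: "K \<ge> 0"
  proof -
    have "0 \<le> (1 + (norm (0::real^'d))^2) * f 0" using nn[of 0] by simp
    also have "\<dots> \<le> K * exp (- b * norm (0::real^'d))" by (rule bd)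
    finally show ?thesis by simp
  qed
  define F where "F y = (1 + (norm y)^2) * f y" for y :: "real^'d"
  have Fm[measurable]: "F \<in> borel_measurable lborel" unfolding F_def by measurable
  have Fnn: "\<And>y. 0 \<le> F y" unfolding F_def using nn by simp
  have "(\<integral>\<^sup>+y. ennreal (F y) \<partial>lborel) \<le> (\<integral>\<^sup>+y. ennreal K * ennreal (exp (- b * norm (y::real^'d))) \<partial>lborel)"
  proof (rule nn_integral_mono)
    fix y :: "real^'d"
    have "ennreal (F y) \<le> ennreal (K * exp (- b * norm y))" unfolding F_def by (rule ennreal_leI[OF bd])
    also have "\<dots> = ennreal K * ennreal (exp (- b * norm y))" using K by (simp add: ennreal_mult)
    finally show "ennreal (F y) \<le> ennreal K * ennreal (exp (- b * norm y))" .
  qed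
  also have "\<dots> = ennreal K * (\<integral>\<^sup>+y. ennreal (exp (- b * norm (y::real^'d))) \<partial>lborel)"
    by (rule nn_integral_cmult) simp
  also have "\<dots> < \<infinity>" using exp_norm_nn_finite[OF b, where 'a="real^'d"] by (simp add: ennreal_mult_less_top)
  finally have Fint: "integrable lborel F" by (intro integrableI_nonneg) (auto simp: Fnn)
  have comp: "\<bar>y $ a\<bar> \<le> norm y" for y :: "real^'d" and a by (rule component_le_norm_cart)
  show "integrable (density lborel (\<lambda>y. ennreal (f y))) (\<lambda>y. y$i * y$i')"
  proof (subst integrable_density)
    show "integrable lborel (\<lambda>y. f y *\<^sub>R (y$i * y$i'))"
    proof (rule Bochner_Integration.integrable_bound[OF Fint])
      show "(\<lambda>y. f y *\<^sub>R (y$i * y$i')) \<in> borel_measurable lborel" by measurable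
      show "AE y in lborel. norm (f y *\<^sub>R (y$i * y$i')) \<le> norm (F y)"
      proof (rule AE_I2)
        fix y :: "real^'d"
        have "\<bar>y$i * y$i'\<bar> \<le> norm y * norm y"
          unfolding abs_mult by (intro mult_mono comp) auto
        also have "\<dots> \<le> 1 + (norm y)^2" by (simp add: power2_eq_square)
        finally have "f y * \<bar>y$i * y$i'\<bar> \<le> f y * (1 + (norm y)^2)"
          using nn[of y] by (intro mult_left_mono) auto
        then show "norm (f y *\<^sub>R (y$i * y$i')) \<le> norm (F y)"
          using nn[of y] Fnn[of y] by (simp add: F_def abs_mult mult.commute)
      qed
    qed
  qed (auto simp: nn)
  show "integrable (density lborel (\<lambda>y. ennreal (f y))) (\<lambda>y. y$i)"
  proof (subst integrable_density)
    show "integrable lborel (\<lambda>y. f y *\<^sub>R (y$i))"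
    proof (rule Bochner_Integration.integrable_bound[OF Fint])
      show "(\<lambda>y. f y *\<^sub>R (y$i)) \<in> borel_measurable lborel" by measurable
      show "AE y in lborel. norm (f y *\<^sub>R (y$i)) \<le> norm (F y)"
      proof (rule AE_I2)
        fix y :: "real^'d"
        have "norm y \<le> 1 + (norm y)^2"
        proof (cases "norm y \<le> 1")
          case True then show ?thesis by (smt (verit) zero_le_power2)
        next
          case False then have "norm y \<le> norm y * norm y" by (simp add: mult_le_cancel_left1)
          then show ?thesis by (simp add: power2_eq_square)
        qed
        then have "\<bar>y$i\<bar> \<le> 1 + (norm y)^2" using comp[of y i] by linarith
        then have "f y * \<bar>y$i\<bar> \<le> f y * (1 + (norm y)^2)"
          using nn[of y] by (intro mult_left_mono) auto
        then show "norm (f y *\<^sub>R (y$i)) \<le> norm (F y)"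
          using nn[of y] Fnn[of y] by (simp add: F_def abs_mult mult.commute)
      qed
    qed
  qed (auto simp: nn)
qed

theorem proposition1:
  fixes M :: "'a measure"
    and S :: "nat \<Rightarrow> 'a \<Rightarrow> nat"
    and Y :: "nat \<Rightarrow> 'a \<Rightarrow> real^'d"
    and T K t k :: nat
    and \<mu> :: "nat \<Rightarrow> real^'d"
    and \<Sigma> :: "nat \<Rightarrow> real^'d^'d"
    and lam chi psi :: "nat \<Rightarrow> real"
    and j h :: 'd
    and C :: "'d set"
  assumes "prob_space M"
    and "hom_markov_chain M S T K"
    and "\<forall>s\<in>{1..T}. Y s \<in> borel_measurable M"
    and "t \<in> {1..T}" and "k \<in> {1..K}"
    and "measure M {\<omega>\<in>space M. S t \<omega> = k} > 0"
    and "sym_pos_def (\<Sigma> k)" and "det (\<Sigma> k) = 1"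
    and "chi k > 0" and "psi k > 0"
    and "distributed (uniform_measure M {\<omega>\<in>space M. S t \<omega> = k}) lborel (Y t)
           (\<lambda>y. ennreal (GH_density (\<mu> k) (\<Sigma> k) (lam k) (chi k) (psi k) y))"
    and "j \<noteq> h"
    and "C \<subseteq> UNIV - {j, h}"
    and "separates (precision_edge (matrix_inv (\<Sigma> k))) C j h"
  shows "AE \<omega> in uniform_measure M {\<omega>\<in>space M. S t \<omega> = k}.
           cond_cov (uniform_measure M {\<omega>\<in>space M. S t \<omega> = k})
                    (coord_sigma M (Y t) C)
                    (\<lambda>\<omega>. Y t \<omega> $ j) (\<lambda>\<omega>. Y t \<omega> $ h) \<omega> = 0"
proof -
  define A0 where "A0 = {\<omega>\<in>space M. S t \<omega> = k}"
  define N where "N = uniform_measure M A0"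
  define X where "X = Y t"
  define Sg where "Sg = \<Sigma> k"
  define Th where "Th = matrix_inv Sg"
  define mu where "mu = \<mu> k"
  define f where "f = GH_density mu Sg (lam k) (chi k) (psi k)"
  define fe where "fe = (\<lambda>y. ennreal (f y))"
  define ND where "ND = density lborel fe"
  interpret M: prob_space M by (rule assms(1))
  have St: "S t \<in> measurable M (count_space UNIV)"
    using assms(2,4) unfolding hom_markov_chain_def by auto
  have A0: "A0 \<in> sets M"
  proof -
    have "S t -` {k} \<inter> space M \<in> sets M" using measurable_sets[OF St] by simp
    moreover have "S t -` {k} \<inter> space M = A0" by (auto simp: A0_def)
    ultimately show ?thesis by simp
  qed
  have A0pos: "emeasure M A0 \<noteq> 0" using assms(6) by (simp add: A0_def M.emeasure_eq_measure)
  have A0fin: "emeasure M A0 \<noteq> \<infinity>" by (simp add: M.emeasure_eq_measure)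
  interpret N: prob_space N unfolding N_def by (rule prob_space_uniform_measure[OF A0pos A0fin])
  have sN[simp]: "sets N = sets M" "space N = space M" by (simp_all add: N_def)
  have XM[measurable]: "X \<in> borel_measurable M" using assms(3,4) by (simp add: X_def)
  have XN[measurable]: "X \<in> borel_measurable N"
    using XM by (simp add: measurable_cong_sets[OF sN(1) refl])
  have dist: "distributed N lborel X fe"
    using assms(11) by (simp add: N_def A0_def X_def fe_def f_def mu_def Sg_def)
  then have DX: "distr N lborel X = ND" and fem: "fe \<in> borel_measurable borel"
    by (auto simp: distributed_def ND_def)
  have SP: "sym_pos_def Sg" using assms(7) by (simp add: Sg_def)
  have symT: "transpose Th = Th" and pd: "\<And>x. x \<noteq> 0 \<Longrightarrow> x \<bullet> (Th *v x) > 0"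
    using sym_pos_inv[OF SP] by (auto simp: Th_def)
  obtain c where c: "c > 0" and c2: "\<And>x. x \<bullet> (Th *v x) \<ge> c * (norm x)^2"
    using quad_lower_bound[OF pd] by blast
  have c3: "\<And>x. x \<bullet> (matrix_inv Sg *v x) \<ge> c * (norm x)^2" using c2 by (simp add: Th_def)
  have detnn: "det Sg \<ge> 0" using assms(8) by (simp add: Sg_def)
  obtain Kc b where b: "b > 0" and fnn': "\<And>y. 0 \<le> GH_density mu Sg (lam k) (chi k) (psi k) y"
    and fbd': "\<And>y. (1 + (norm y)^2) * GH_density mu Sg (lam k) (chi k) (psi k) y \<le> Kc * exp (- b * norm y)"
    using GH_bound[OF c c3 assms(9) assms(10) detnn, where \<mu>=mu and lam="lam k"] by metis
  have fnn: "\<And>y. 0 \<le> f y" using fnn' by (simp add: f_def)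
  have fbd: "\<And>y. (1 + (norm y)^2) * f y \<le> Kc * exp (- b * norm y)" using fbd' by (simp add: f_def)
  have f_eq: "f = (\<lambda>y. enn2real (fe y))" using fnn by (auto simp: fe_def fun_eq_iff)
  have fm[measurable]: "f \<in> borel_measurable borel" unfolding f_eq using fem by measurable
  have mom2: "\<And>a a'. integrable ND (\<lambda>y. y$a * y$a')"
    using GH_moments(1)[OF fm fnn fbd b] by (simp add: ND_def fe_def)
  have mom1: "\<And>a. integrable ND (\<lambda>y. y$a)"
    using GH_moments(2)[OF fm fnn fbd b] by (simp add: ND_def fe_def)
  have jC: "j \<notin> C" "h \<notin> C" using assms(13) by auto
  define D where "D = {b. (\<lambda>a b. precision_edge Th a b \<and> a \<notin> C \<and> b \<notin> C)\<^sup>*\<^sup>* j b}"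
  have sep: "separates (precision_edge Th) C j h" using assms(14) by (simp add: Th_def Sg_def)
  have gp: "j \<in> D" "h \<notin> D" "D \<inter> C = {}" "\<And>a b. a \<in> D \<Longrightarrow> b \<notin> D \<Longrightarrow> b \<notin> C \<Longrightarrow> Th$a$b = 0"
    using graph_part[OF sep jC(1)] unfolding D_def by blast+
  define L where "L = TT Th D C"
  define T' where "T' y = mu + L (y - mu)" for y
  have Llin: "linear L" by (simp add: L_def TT_linear)
  have Linv: "\<And>x. L (L x) = x" using TT_invol[OF gp(3)] by (simp add: L_def)
  have T'inv: "\<And>y. T' (T' y) = y" by (simp add: T'_def Linv)
  have T'fix: "\<And>y i. i \<notin> D \<Longrightarrow> T' y $ i = y $ i" by (simp add: T'_def L_def TT_fix)
  have T'alt: "T' = (\<lambda>z. (mu - L mu) + z) \<circ> L"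
    using Llin by (auto simp: fun_eq_iff T'_def linear_diff)
  have cL: "continuous_on UNIV L" using Llin by (simp add: linear_continuous_on linear_linear)
  have Lm[measurable]: "L \<in> borel_measurable borel" using cL by (rule borel_measurable_continuous_onI)
  have T'm[measurable]: "T' \<in> borel_measurable borel" unfolding T'alt by measurable
  have T'lb: "distr lborel borel T' = lborel"
  proof -
    have "distr lborel borel T' = distr (distr lborel borel L) borel ((+) (mu - L mu))"
      unfolding T'alt by (subst distr_distr) (auto simp: comp_def)
    also have "\<dots> = lborel"
      using lborel_linear_involution[OF Llin Linv] lborel_distr_plus[of "mu - L mu"] by simp
    finally show ?thesis .
  qed
  have fT': "\<And>y. f (T' y) = f y"
  proof -
    fix y
    have e1: "T' y - mu = L (y - mu)" by (simp add: T'_def)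
    have e2: "L (y - mu) \<bullet> (Th *v L (y - mu)) = (y - mu) \<bullet> (Th *v (y - mu))"
      using TT_quad[OF symT pd gp(3) gp(4)] by (simp add: L_def)
    show "f (T' y) = f y"
      unfolding f_def GH_density_def Let_def Th_def[symmetric] e1 e2 ..
  qed
  have NDinv: "distr ND lborel T' = ND"
    unfolding ND_def by (rule distr_density_invariant[OF T'm T'lb fem]) (simp add: fe_def fT')
  have T'ND: "T' \<in> measurable ND lborel" "T' \<in> borel_measurable ND" unfolding ND_def using T'm by simp_all
  have tr_int: "(\<integral>\<omega>. \<phi> (X \<omega>) \<partial>N) = (\<integral>y. \<phi> y \<partial>ND)" if [measurable]: "\<phi> \<in> borel_measurable borel" for \<phi> :: "real^'d \<Rightarrow> real"
    by (subst integral_distr[symmetric, of X N lborel]) (auto simp: DX)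
  have tr_intble: "integrable N (\<lambda>\<omega>. \<phi> (X \<omega>)) \<longleftrightarrow> integrable ND \<phi>" if [measurable]: "\<phi> \<in> borel_measurable borel" for \<phi> :: "real^'d \<Rightarrow> real"
    by (subst integrable_distr_eq[symmetric, of X N lborel]) (auto simp: DX)
  have sym_int: "(\<integral>y. \<phi> (T' y) \<partial>ND) = (\<integral>y. \<phi> y \<partial>ND)" if [measurable]: "\<phi> \<in> borel_measurable borel" for \<phi> :: "real^'d \<Rightarrow> real"
    by (subst integral_distr[symmetric, of T' ND lborel]) (auto simp: NDinv T'ND)
  have sym_intble: "integrable ND (\<lambda>y. \<phi> (T' y)) \<longleftrightarrow> integrable ND \<phi>" if [measurable]: "\<phi> \<in> borel_measurable borel" for \<phi> :: "real^'d \<Rightarrow> real"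
    by (subst integrable_distr_eq[symmetric, of T' ND lborel]) (auto simp: NDinv T'ND)
  have vj: "\<And>i. (\<lambda>z::real^'d. z $ i) \<in> borel_measurable borel" by measurable
  have mT'j: "(\<lambda>y. T' y $ j) \<in> borel_measurable borel" using measurable_compose[OF T'm vj] .
  have mT'jh: "(\<lambda>y. T' y $ j * y $ h) \<in> borel_measurable borel"
    using borel_measurable_times[OF mT'j vj] .
  have iXj: "integrable N (\<lambda>\<omega>. X \<omega> $ j)" using tr_intble[of "\<lambda>y. y $ j"] mom1 by simp
  have iXh: "integrable N (\<lambda>\<omega>. X \<omega> $ h)" using tr_intble[of "\<lambda>y. y $ h"] mom1 by simp
  have iX'j: "integrable N (\<lambda>\<omega>. T' (X \<omega>) $ j)"
    using tr_intble[OF mT'j] sym_intble[of "\<lambda>y. y $ j"] mom1 by simp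
  have iXjh: "integrable N (\<lambda>\<omega>. X \<omega> $ j * X \<omega> $ h)"
    using tr_intble[of "\<lambda>y. y $ j * y $ h"] mom2 by simp
  have iX'jh: "integrable N (\<lambda>\<omega>. T' (X \<omega>) $ j * X \<omega> $ h)"
  proof -
    have "integrable ND (\<lambda>y. T' y $ j * T' y $ h)"
      using sym_intble[of "\<lambda>y. y $ j * y $ h"] mom2 by simp
    then have "integrable ND (\<lambda>y. T' y $ j * y $ h)" using T'fix[OF gp(2)] by simp
    then show ?thesis using tr_intble[OF mT'jh] by simp
  qed
  define G where "G = (\<Union>i\<in>C. {(\<lambda>\<omega>. X \<omega> $ i) -` B \<inter> space M | B. B \<in> sets borel})"
  define F where "F = coord_sigma M X C"
  have Gsub: "G \<subseteq> Pow (space M)" by (auto simp: G_def)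
  have Feq: "F = sigma (space M) G" by (simp add: F_def coord_sigma_def G_def)
  have sF: "sets F = sigma_sets (space M) G" "space F = space M"
    unfolding Feq using sets_measure_of[OF Gsub] space_measure_of[OF Gsub] by simp_all
  have XiM: "\<And>i. (\<lambda>\<omega>. X \<omega> $ i) \<in> borel_measurable M" using measurable_compose[OF XM vj] .
  have GsM: "G \<subseteq> sets M" unfolding G_def using measurable_sets[OF XiM] by blast
  have FsN: "sets F \<subseteq> sets N" using sets.sigma_sets_subset[OF GsM] sF by simp
  have subalg: "subalgebra N F" unfolding subalgebra_def using FsN sF by simp
  have fms: "finite_measure_subalgebra N F"
    unfolding finite_measure_subalgebra_def finite_measure_subalgebra_axioms_def
    using subalg N.finite_measure_axioms by simp
  interpret Fs: sigma_finite_subalgebra N F by (rule finite_measure_subalgebra_is_sigma_finite[OF fms])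
  have XcF: "(\<lambda>\<omega>. X \<omega> $ c) \<in> borel_measurable F" if "c \<in> C" for c
  proof (rule measurableI)
    fix x assume "x \<in> space F" show "X x $ c \<in> space borel" by simp
  next
    fix B :: "real set" assume "B \<in> sets borel"
    then have "(\<lambda>\<omega>. X \<omega> $ c) -` B \<inter> space M \<in> G" using that by (auto simp: G_def)
    then show "(\<lambda>\<omega>. X \<omega> $ c) -` B \<inter> space F \<in> sets F" using sF by (auto intro: sigma_sets.Basic)
  qed
  have Fsets: "\<exists>B\<in>sets borel. A = X -` B \<inter> space M \<and> (\<forall>y. T' y \<in> B \<longleftrightarrow> y \<in> B)" if "A \<in> sets F" for A
  proof -
    have "A \<in> sigma_sets (space M) G" using that sF by simp
    then show ?thesis
    proof (induction rule: sigma_sets.induct)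
      case (Basic a)
      then obtain i B0 where i: "i \<in> C" "B0 \<in> sets borel" "a = (\<lambda>\<omega>. X \<omega> $ i) -` B0 \<inter> space M"
        by (auto simp: G_def)
      have "(\<lambda>y::real^'d. y $ i) -` B0 \<in> sets borel" using measurable_sets_borel[OF vj i(2)] .
      moreover have "a = X -` ((\<lambda>y. y $ i) -` B0) \<inter> space M" using i(3) by auto
      moreover have "\<forall>y. T' y \<in> (\<lambda>y. y $ i) -` B0 \<longleftrightarrow> y \<in> (\<lambda>y. y $ i) -` B0"
      proof -
        have "i \<notin> D" using gp(3) i(1) by auto
        then show ?thesis using T'fix by simp
      qed
      ultimately show ?case by blast
    next
      case Empty show ?case by (intro bexI[of _ "{}"]) auto
    next
      case (Compl a)
      then obtain B where B: "B \<in> sets borel" "a = X -` B \<inter> space M" "\<forall>y. T' y \<in> B \<longleftrightarrow> y \<in> B"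
        by blast
      show ?case
      proof (intro bexI[of _ "UNIV - B"] conjI)
        show "space M - a = X -` (UNIV - B) \<inter> space M" using B by auto
        show "\<forall>y. T' y \<in> UNIV - B \<longleftrightarrow> y \<in> UNIV - B" using B by auto
        show "UNIV - B \<in> sets borel" using B by auto
      qed
    next
      case (Union a)
      have "\<forall>i. \<exists>B. B \<in> sets borel \<and> a i = X -` B \<inter> space M \<and> (\<forall>y. T' y \<in> B \<longleftrightarrow> y \<in> B)"
        using Union.IH by blast
      from choice[OF this] obtain BB where BB0: "\<forall>i. BB i \<in> sets borel \<and> a i = X -` BB i \<inter> space M \<and> (\<forall>y. T' y \<in> BB i \<longleftrightarrow> y \<in> BB i)"
        by blast
      then have BB: "\<And>i. BB i \<in> sets borel" "\<And>i. a i = X -` BB i \<inter> space M"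
        "\<And>i y. T' y \<in> BB i \<longleftrightarrow> y \<in> BB i" by auto
      show ?case
      proof (intro bexI[of _ "\<Union>i. BB i"] conjI)
        show "(\<Union>i. a i) = X -` (\<Union>i. BB i) \<inter> space M" using BB(2) by auto
        show "\<forall>y. T' y \<in> (\<Union>i. BB i) \<longleftrightarrow> y \<in> (\<Union>i. BB i)" using BB(3) by auto
        show "(\<Union>i. BB i) \<in> sets borel" using BB(1) by auto
      qed
    qed
  qed
  have keysym: "(\<integral>\<omega>. indicator B (X \<omega>) * \<phi> (X \<omega>) \<partial>N) = (\<integral>\<omega>. indicator B (X \<omega>) * \<phi> (T' (X \<omega>)) \<partial>N)"
    if phm[measurable]: "\<phi> \<in> borel_measurable borel" and Bm[measurable]: "B \<in> sets borel"
      and Binv: "\<forall>y. T' y \<in> B \<longleftrightarrow> y \<in> B" for \<phi> :: "real^'d \<Rightarrow> real" and B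
  proof -
    have mpT[measurable]: "(\<lambda>y. \<phi> (T' y)) \<in> borel_measurable borel" using measurable_compose[OF T'm phm] .
    have m1: "(\<lambda>y. indicator B y * \<phi> y) \<in> borel_measurable borel" by measurable
    have m2: "(\<lambda>y. indicator B y * \<phi> (T' y)) \<in> borel_measurable borel" by measurable
    have "(\<integral>\<omega>. indicator B (X \<omega>) * \<phi> (X \<omega>) \<partial>N) = (\<integral>y. indicator B y * \<phi> y \<partial>ND)"
      using tr_int[OF m1] by simp
    also have "\<dots> = (\<integral>y. indicator B (T' y) * \<phi> (T' y) \<partial>ND)" using sym_int[OF m1] by simp
    also have "\<dots> = (\<integral>y. indicator B y * \<phi> (T' y) \<partial>ND)" using Binv by (simp add: indicator_def)
    also have "\<dots> = (\<integral>\<omega>. indicator B (X \<omega>) * \<phi> (T' (X \<omega>)) \<partial>N)" using tr_int[OF m2] by simp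
    finally show ?thesis .
  qed
  have setsym: "(\<integral>\<omega>\<in>A. \<phi> (X \<omega>) \<partial>N) = (\<integral>\<omega>\<in>A. \<phi> (T' (X \<omega>)) \<partial>N)"
    if phm: "\<phi> \<in> borel_measurable borel" and AF: "A \<in> sets F" for \<phi> :: "real^'d \<Rightarrow> real" and A
  proof -
    obtain B where B: "B \<in> sets borel" "A = X -` B \<inter> space M" "\<forall>y. T' y \<in> B \<longleftrightarrow> y \<in> B"
      using Fsets[OF AF] by blast
    have ind: "\<And>\<omega>. \<omega> \<in> space N \<Longrightarrow> indicator A \<omega> = (indicator B (X \<omega>) :: real)"
      using B(2) by (auto simp: indicator_def)
    have "(\<integral>\<omega>\<in>A. \<phi> (X \<omega>) \<partial>N) = (\<integral>\<omega>. indicator B (X \<omega>) * \<phi> (X \<omega>) \<partial>N)"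
      unfolding set_lebesgue_integral_def by (intro Bochner_Integration.integral_cong) (auto simp: ind)
    also have "\<dots> = (\<integral>\<omega>. indicator B (X \<omega>) * \<phi> (T' (X \<omega>)) \<partial>N)"
      by (rule keysym[OF phm B(1) B(3)])
    also have "\<dots> = (\<integral>\<omega>\<in>A. \<phi> (T' (X \<omega>)) \<partial>N)"
      unfolding set_lebesgue_integral_def by (intro Bochner_Integration.integral_cong) (auto simp: ind)
    finally show ?thesis .
  qed
  have halfsum: "(\<integral>\<omega>\<in>A. (1/2) * (g1 \<omega> + g2 \<omega>) \<partial>N) = (1/2) * ((\<integral>\<omega>\<in>A. g1 \<omega> \<partial>N) + (\<integral>\<omega>\<in>A. g2 \<omega> \<partial>N))"
    if "A \<in> sets N" "integrable N g1" "integrable N g2" for A and g1 g2 :: "'a \<Rightarrow> real"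
  proof -
    have si: "set_integrable N A g1" "set_integrable N A g2"
      unfolding set_integrable_def using integrable_mult_indicator that by blast+
    show ?thesis using set_integral_add(2)[OF si] by simp
  qed
  define w where "w y = (matrix_inv (QD Th D) *v vvD Th D C (y - mu)) $ j" for y
  define m where "m \<omega> = mu $ j - w (X \<omega>)" for \<omega>
  have mrel: "X \<omega> $ j + T' (X \<omega>) $ j = 2 * m \<omega>" for \<omega>
  proof -
    have "(X \<omega> - mu) $ j + L (X \<omega> - mu) $ j = -2 * w (X \<omega>)"
      using TT_sum[OF gp(1), where x="X \<omega> - mu" and Th=Th and C=C] by (simp add: L_def w_def)
    then show ?thesis by (simp add: T'_def m_def algebra_simps)
  qed
  have mhalf: "m \<omega> = (1/2) * (X \<omega> $ j + T' (X \<omega>) $ j)" for \<omega> using mrel[of \<omega>] by simp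
  have meq: "m \<omega> = mu $ j - (\<Sum>a\<in>UNIV. matrix_inv (QD Th D) $ j $ a *
      (if a \<in> D then (\<Sum>c\<in>C. Th$a$c * (X \<omega> $ c - mu $ c)) else 0))" for \<omega>
    by (simp only: m_def w_def matrix_vector_mult_def vvD_def vec_lambda_beta vector_minus_component)
  have mF: "m \<in> borel_measurable F"
  proof -
    have "(\<lambda>\<omega>. \<Sum>a\<in>UNIV. matrix_inv (QD Th D) $ j $ a *
      (if a \<in> D then (\<Sum>c\<in>C. Th$a$c * (X \<omega> $ c - mu $ c)) else 0)) \<in> borel_measurable F"
    proof (rule borel_measurable_sum)
      fix a :: 'd
      show "(\<lambda>\<omega>. matrix_inv (QD Th D) $ j $ a *
        (if a \<in> D then (\<Sum>c\<in>C. Th$a$c * (X \<omega> $ c - mu $ c)) else 0)) \<in> borel_measurable F"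
      proof (cases "a \<in> D")
        case True
        have Sm: "(\<lambda>\<omega>. \<Sum>c\<in>C. Th$a$c * (X \<omega> $ c - mu $ c)) \<in> borel_measurable F"
          by (intro borel_measurable_sum borel_measurable_times borel_measurable_diff borel_measurable_const XcF)
        show ?thesis using True borel_measurable_times[OF borel_measurable_const Sm, of "matrix_inv (QD Th D) $ j $ a"]
          by simp
      next
        case False then show ?thesis by simp
      qed
    qed
    then have "(\<lambda>\<omega>. mu $ j - (\<Sum>a\<in>UNIV. matrix_inv (QD Th D) $ j $ a *
      (if a \<in> D then (\<Sum>c\<in>C. Th$a$c * (X \<omega> $ c - mu $ c)) else 0))) \<in> borel_measurable F"
      by (intro borel_measurable_diff borel_measurable_const)
    moreover have "m = (\<lambda>\<omega>. mu $ j - (\<Sum>a\<in>UNIV. matrix_inv (QD Th D) $ j $ a *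
      (if a \<in> D then (\<Sum>c\<in>C. Th$a$c * (X \<omega> $ c - mu $ c)) else 0)))"
      using meq by (simp add: fun_eq_iff)
    ultimately show ?thesis by simp
  qed
  have im: "integrable N m"
  proof -
    have "integrable N (\<lambda>\<omega>. (1/2) * (X \<omega> $ j + T' (X \<omega>) $ j))"
      using Bochner_Integration.integrable_add[OF iXj iX'j] by (rule integrable_mult_right)
    moreover have "m = (\<lambda>\<omega>. (1/2) * (X \<omega> $ j + T' (X \<omega>) $ j))" using mhalf by (simp add: fun_eq_iff)
    ultimately show ?thesis by simp
  qed
  have mhalf2: "m \<omega> * X \<omega> $ h = (1/2) * (X \<omega> $ j * X \<omega> $ h + T' (X \<omega>) $ j * X \<omega> $ h)" for \<omega>
    using mhalf[of \<omega>] by (simp add: algebra_simps)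
  have imh: "integrable N (\<lambda>\<omega>. m \<omega> * X \<omega> $ h)"
  proof -
    have "integrable N (\<lambda>\<omega>. (1/2) * (X \<omega> $ j * X \<omega> $ h + T' (X \<omega>) $ j * X \<omega> $ h))"
      using Bochner_Integration.integrable_add[OF iXjh iX'jh] by (rule integrable_mult_right)
    then show ?thesis by (simp only: mhalf2)
  qed
  have XhN: "(\<lambda>\<omega>. X \<omega> $ h) \<in> borel_measurable N" using measurable_compose[OF XN vj] .
  have vjh: "(\<lambda>y::real^'d. y $ j * y $ h) \<in> borel_measurable borel" by measurable
  have C1: "AE \<omega> in N. real_cond_exp N F (\<lambda>\<omega>. X \<omega> $ j) \<omega> = m \<omega>"
  proof (rule Fs.real_cond_exp_charact)
    fix A assume A: "A \<in> sets F"
    then have AN: "A \<in> sets N" using FsN by auto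
    have s1: "(\<integral>\<omega>\<in>A. X \<omega> $ j \<partial>N) = (\<integral>\<omega>\<in>A. T' (X \<omega>) $ j \<partial>N)"
      using setsym[OF vj A] by simp
    have "(\<integral>\<omega>\<in>A. m \<omega> \<partial>N) = (\<integral>\<omega>\<in>A. (1/2) * (X \<omega> $ j + T' (X \<omega>) $ j) \<partial>N)"
      by (simp only: mhalf)
    also have "\<dots> = (1/2) * ((\<integral>\<omega>\<in>A. X \<omega> $ j \<partial>N) + (\<integral>\<omega>\<in>A. T' (X \<omega>) $ j \<partial>N))"
      by (rule halfsum[OF AN iXj iX'j])
    finally show "(\<integral>\<omega>\<in>A. X \<omega> $ j \<partial>N) = (\<integral>\<omega>\<in>A. m \<omega> \<partial>N)" using s1 by simp
  qed (use iXj im mF in auto)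
  have C2: "AE \<omega> in N. real_cond_exp N F (\<lambda>\<omega>. X \<omega> $ j * X \<omega> $ h) \<omega> = real_cond_exp N F (\<lambda>\<omega>. m \<omega> * X \<omega> $ h) \<omega>"
  proof (rule Fs.real_cond_exp_charact)
    fix A assume A: "A \<in> sets F"
    then have AN: "A \<in> sets N" using FsN by auto
    have s2: "(\<integral>\<omega>\<in>A. X \<omega> $ j * X \<omega> $ h \<partial>N) = (\<integral>\<omega>\<in>A. T' (X \<omega>) $ j * X \<omega> $ h \<partial>N)"
      using setsym[OF vjh A] T'fix[OF gp(2)] by simp
    have "(\<integral>\<omega>\<in>A. real_cond_exp N F (\<lambda>\<omega>. m \<omega> * X \<omega> $ h) \<omega> \<partial>N) = (\<integral>\<omega>\<in>A. m \<omega> * X \<omega> $ h \<partial>N)"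
      using Fs.real_cond_exp_intA[OF imh A] by simp
    also have "\<dots> = (\<integral>\<omega>\<in>A. (1/2) * (X \<omega> $ j * X \<omega> $ h + T' (X \<omega>) $ j * X \<omega> $ h) \<partial>N)"
      by (simp only: mhalf2)
    also have "\<dots> = (1/2) * ((\<integral>\<omega>\<in>A. X \<omega> $ j * X \<omega> $ h \<partial>N) + (\<integral>\<omega>\<in>A. T' (X \<omega>) $ j * X \<omega> $ h \<partial>N))"
      by (rule halfsum[OF AN iXjh iX'jh])
    finally show "(\<integral>\<omega>\<in>A. X \<omega> $ j * X \<omega> $ h \<partial>N) = (\<integral>\<omega>\<in>A. real_cond_exp N F (\<lambda>\<omega>. m \<omega> * X \<omega> $ h) \<omega> \<partial>N)"
      using s2 by simp
  qed (use iXjh Fs.real_cond_exp_int(1)[OF imh] in auto)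
  have C3: "AE \<omega> in N. real_cond_exp N F (\<lambda>\<omega>. m \<omega> * X \<omega> $ h) \<omega> = m \<omega> * real_cond_exp N F (\<lambda>\<omega>. X \<omega> $ h) \<omega>"
    by (rule Fs.real_cond_exp_mult[OF mF XhN imh])
  have final: "AE \<omega> in N. cond_cov N F (\<lambda>\<omega>. X \<omega> $ j) (\<lambda>\<omega>. X \<omega> $ h) \<omega> = 0"
    using C1 C2 C3 by eventually_elim (simp add: cond_cov_def)
  then show ?thesis unfolding N_def A0_def F_def X_def .
qed

end
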